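(* Every Pisot number $q \in (1, 1.933]$ satisfies $|q'| \geq \frac{\sqrt5-1}{2}$ for all Galois conjugates $q'$ of $q$.
   Context: A Pisot number is a real algebraic integer $q>1$ all of whose other Galois conjugates have absolute value strictly less than $1$. *)

theory Defs
  imports "HOL-Analysis.Analysis" "HOL-Computational_Algebra.Computational_Algebra"
begin

definition galois_conjugate :: "complex \<Rightarrow> complex \<Rightarrow> bool" where
  "galois_conjugate x z \<longleftrightarrow>
     (\<exists>p :: rat poly. irreducible p \<and> poly (map_poly of_rat p) x = 0 \<and> poly (map_poly of_rat p) z = 0)"

definition pisot :: "real \<Rightarrow> bool" where
  "pisot q \<longleftrightarrow> q > 1 \<and> algebraic_int q \<and>
     (\<forall>z. galois_conjugate (complex_of_real q) z \<and> z \<noteq> complex_of_real q \<longrightarrow> cmod z < 1)"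

end

theory Submission
  imports Defs "Berlekamp_Zassenhaus.Factor_Bound"
begin

lemma g_facts:
  fixes g :: real
  assumes gdef: "g = (sqrt 5 - 1) / 2"
  shows "g * g = 1 - g" "618/1000 < g" "g < 6181/10000"
proof -
  have s5: "sqrt 5 * sqrt 5 = 5" by simp
  show "g * g = 1 - g" unfolding gdef using s5 by (simp add: field_simps)
  have "2236/1000 < sqrt 5" by (rule real_less_rsqrt) (simp add: power2_eq_square)
  then show "618/1000 < g" unfolding gdef by simp
  have "sqrt 5 < sqrt ((22362/10000) ^ 2)" by (rule real_sqrt_less_mono) (simp add: power2_eq_square)
  then have "sqrt 5 < 22362/10000" by simp
  then show "g < 6181/10000" unfolding gdef by simp
qed

lemma real_core:
  fixes q r d g :: real and n :: int
  assumes gg: "g * g = 1 - g" "618/1000 < g" "g < 6181/10000"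
    and q1: "q > 1" and q2: "q \<le> 1933 / 1000" and qr: "q * r \<ge> 1" and rg: "r < g"
    and dd: "d = \<bar>of_int n - (q - 1/q)\<bar>"
    and h1: "1 - r^2 - r * d \<le> q * r^2 - 1/q"
    and h2: "r * d - (1 - r^2) \<le> q * r^2 - 1/q"
  shows "n = 0 \<and> q * r = 1"
proof -
  define s where "s = q - 1/q"
  have r0: "r > 0"
  proof (rule ccontr)
    assume "\<not> r > 0"
    then have "q * r \<le> 0" using q1 by (simp add: mult_nonneg_nonpos)
    then show False using qr by simp
  qed
  have qg: "q > 1 + g"
  proof -
    have "q * g > 1" using qr rg q1 by (smt (verit) mult_strict_left_mono)
    then have "q * g > g * g + g" using gg by simp
    then have "q * g > (1 + g) * g" by (simp add: algebra_simps)
    moreover have "0 \<le> g" using gg by simp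
    ultimately show ?thesis using mult_right_less_imp_less by blast
  qed
  have qs: "q * s = q^2 - 1" unfolding s_def using q1 by (simp add: field_simps power2_eq_square)
  have s1: "s > 1"
  proof -
    have "(q - 1 - g) * (q + g) > 0" using qg gg by (intro mult_pos_pos) auto
    then have "q^2 - q - 1 > 0" using gg by (simp add: algebra_simps power2_eq_square)
    then have "q * s > q * 1" using qs by simp
    then show ?thesis using q1 by simp
  qed
  have s2: "s < 142/100"
  proof -
    have "1/q \<ge> 1 / (1933/1000)" using q1 q2 by (intro divide_left_mono) auto
    then show ?thesis unfolding s_def using q2 by simp
  qed
  have dd': "d = \<bar>of_int n - s\<bar>" using dd s_def by simp
  have h2q: "q * r * d \<le> (q - 1) + (q^2 - q) * r^2"
  proof -
    have "q * (r * d - (1 - r^2)) \<le> q * (q * r^2 - 1/q)" using h2 q1 by (intro mult_left_mono) auto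
    moreover have "q * (q * r^2 - 1/q) = q^2 * r^2 - 1" using q1 by (simp add: field_simps power2_eq_square)
    moreover have "q * (r * d - (1 - r^2)) = q * r * d - q + q * r^2" by (simp add: algebra_simps)
    ultimately show ?thesis by (simp add: algebra_simps power2_eq_square)
  qed
  have ident: "(q - 1) + (q^2 - q) * r^2 = q * r * s + (q - 1) * ((1 - r) * (1 - q * r))"
  proof -
    have qrs: "q * r * s = r * (q^2 - 1)" using qs by (metis mult.commute mult.left_commute)
    show ?thesis by (simp only: qrs) (simp add: algebra_simps power2_eq_square)
  qed
  have neg: "(q - 1) * ((1 - r) * (1 - q * r)) \<le> 0"
  proof -
    have "(1 - r) * (1 - q * r) \<le> 0" using rg gg qr by (intro mult_nonneg_nonpos) auto
    moreover have "q - 1 \<ge> 0" using q1 by simp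
    ultimately show ?thesis by (metis mult_nonneg_nonpos)
  qed
  have qr0: "q * r > 0" using q1 r0 by simp
  have dles: "d \<le> s"
  proof -
    have "q * r * d \<le> q * r * s" using h2q ident neg by linarith
    then show ?thesis using qr0 by (metis mult_le_cancel_left_pos)
  qed
  have h1q: "(1 + q) * (1 - q * r^2) \<le> q * r * d"
  proof -
    have "q * (1 - r^2 - r * d) \<le> q * (q * r^2 - 1/q)" using h1 q1 by (intro mult_left_mono) auto
    moreover have "q * (q * r^2 - 1/q) = q^2 * r^2 - 1" using q1 by (simp add: field_simps power2_eq_square)
    moreover have "q * (1 - r^2 - r * d) = q - q * r^2 - q * r * d" by (simp add: algebra_simps)
    ultimately show ?thesis by (simp add: algebra_simps power2_eq_square)
  qed
  have gr2: "g^2 - r^2 > 0" using rg r0 by (simp add: power_strict_mono)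
  consider "n \<le> -1" | "n = 0" | "n = 1" | "n = 2" | "n \<ge> 3" by linarith
  then show ?thesis
  proof cases
    case 1
    then have "d \<ge> s + 1" using dd' s1 by (simp add: abs_if) 
    then show ?thesis using dles by simp
  next
    case 2
    then have "d = s" using dd' s1 by simp
    then have "q * r * s + (q - 1) * ((1 - r) * (1 - q * r)) \<ge> q * r * s" using h2q ident by simp
    then have "(q - 1) * ((1 - r) * (1 - q * r)) \<ge> 0" by simp
    then have "(q - 1) * ((1 - r) * (1 - q * r)) = 0" using neg by simp
    then have "q * r = 1" using q1 rg gg by auto
    then show ?thesis using 2 by simp
  next
    case 3
    then have ds: "d = s - 1" using dd' s1 by simp
    have "q * r * d = r * (q * s) - q * r" unfolding ds by (simp add: algebra_simps)
    also have "\<dots> = r * (q^2 - q - 1)" unfolding qs by (simp add: algebra_simps)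
    finally have "q * r * d = r * (q^2 - q - 1)" .
    then have A: "(1 + q) * (1 - q * r^2) - r * (q^2 - q - 1) \<le> 0" using h1q by linarith
    have pos1: "q^2 - q - 1 > 0" using qs s1 q1
      by (smt (verit) mult_less_cancel_left1)
    have B: "(1 + q) * (1 - q * r^2) - r * (q^2 - q - 1)
        = (1 + q) * q * (1 - g - r^2) + (g - r) * (q^2 - q - 1) + (1 + g - q^2 + 2 * q * g)"
      by (simp add: algebra_simps power2_eq_square)
    have C1: "(1 + q) * q * (1 - g - r^2) \<ge> 0" using q1 gr2 gg by (simp add: power2_eq_square)
    have C2: "(g - r) * (q^2 - q - 1) \<ge> 0" using rg pos1 by simp
    have "q * (q - 2 * g) \<le> (1933/1000) * ((1933/1000) - 2 * (618/1000))"
      using q1 q2 gg qg by (intro mult_mono) auto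
    moreover have "q * (q - 2 * g) = q^2 - 2 * q * g" by (simp add: algebra_simps power2_eq_square)
    moreover have "(1933/1000) * ((1933/1000) - 2 * (618/1000)) = (1347301/1000000::real)" by simp
    ultimately have C3: "1 + g - q^2 + 2 * q * g > 0" using gg by linarith
    show ?thesis using A B C1 C2 C3 by linarith
  next
    case 4
    then have ds: "d = 2 - s" using dd' s2 by simp
    have "q * r * d = 2 * q * r - r * (q * s)" unfolding ds by (simp add: algebra_simps)
    also have "\<dots> = r * (1 + 2 * q - q^2)" unfolding qs by (simp add: algebra_simps)
    finally have "q * r * d = r * (1 + 2 * q - q^2)" .
    then have A: "(1 + q) * (1 - q * r^2) - r * (1 + 2 * q - q^2) \<le> 0" using h1q by linarith
    have pos1: "1 + 2 * q - q^2 > 0"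
    proof -
      have "q * (2 - q) \<ge> 0" using q1 q2 by simp
      then show ?thesis by (simp add: algebra_simps power2_eq_square)
    qed
    have B: "(1 + q) * (1 - q * r^2) - r * (1 + 2 * q - q^2)
        = (1 + q) * q * (1 - g - r^2) + (g - r) * (1 + 2 * q - q^2) + (1 - g - q * g - q^2 + 2 * g * q^2)"
      by (simp add: algebra_simps power2_eq_square)
    have C1: "(1 + q) * q * (1 - g - r^2) \<ge> 0" using q1 gr2 gg by (simp add: power2_eq_square)
    have C2: "(g - r) * (1 + 2 * q - q^2) > 0" using rg pos1 by simp
    have E: "(2 * g - 1) * ((q - 1) * (q - 1 - g)) = (1 - g - q * g - q^2 + 2 * g * q^2) + (2 - 2 * q) * (g * g - (1 - g))"
      by (simp add: algebra_simps power2_eq_square)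
    have C3': "(2 * g - 1) * ((q - 1) * (q - 1 - g)) \<ge> 0" using gg q1 qg by simp
    have C3: "1 - g - q * g - q^2 + 2 * g * q^2 \<ge> 0" using E C3' gg by simp
    show ?thesis using A B C1 C2 C3 by linarith
  next
    case 5
    then have "d \<ge> 3 - s" using dd' s2 by (simp add: abs_if)
    then show ?thesis using dles s2 by simp
  qed
qed

lemma real_degen:
  fixes q g :: real and k m :: int
  assumes gg: "g * g = 1 - g" "618/1000 < g" "g < 6181/10000"
    and q1: "q > 1" and q2: "q \<le> 1933 / 1000" and k: "k = 1 \<or> k = -1"
    and qm: "q + of_int k / q = of_int m" and rg: "1 / q < g"
  shows False
proof -
  have qg: "q * g > 1" using rg q1 by (simp add: field_simps)
  then have "q * g > g * g + g" using gg by simp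
  then have "q * g > (1 + g) * g" by (simp add: algebra_simps)
  moreover have "0 \<le> g" using gg by simp
  ultimately have qg: "q > 1 + g" using mult_right_less_imp_less by blast
  have iq: "1/q \<ge> 1 / (1933/1000)" using q1 q2 by (intro divide_left_mono) auto
  from k show False
  proof
    assume "k = 1"
    then have e: "q + 1/q = of_int m" using qm by simp
    have "(q - 1)^2 > 0" using q1 by simp
    then have "q * q + 1 > 2 * q" by (simp add: algebra_simps power2_eq_square)
    moreover have "(2 - q) * q = 2 * q - q * q" by (simp add: algebra_simps)
    ultimately have "(2 - q) * q < 1" by linarith
    then have "2 - q < 1 / q" using pos_less_divide_eq[of q "2 - q" 1] q1 by simp
    then have "q + 1/q > 2" by linarith
    moreover have "q + 1/q < 3"
    proof -
      have "q * q \<le> (1933/1000) * q" using q2 q1 by (intro mult_right_mono) auto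
      then have "1 + q * q < 3 * q" using q1 by linarith
      moreover have "(3 - q) * q = 3 * q - q * q" by (simp add: algebra_simps)
      ultimately have "1 < (3 - q) * q" by linarith
      then have "1 / q < 3 - q" using pos_divide_less_eq[of q 1 "3 - q"] q1 by simp
      then show ?thesis by linarith
    qed
    ultimately have "2 < m" "m < 3" using e by linarith+
    then show False by linarith
  next
    assume "k = -1"
    then have e: "q - 1/q = of_int m" using qm by simp
    have "(q - 1 - g) * (q + g) > 0" using qg gg by (intro mult_pos_pos) auto
    then have "q * q - q - 1 > 0" using gg by (simp add: algebra_simps)
    moreover have "(q - 1) * q = q * q - q" by (simp add: algebra_simps)
    ultimately have "1 < (q - 1) * q" by linarith
    then have "1 / q < q - 1" using pos_divide_less_eq[of q 1 "q - 1"] q1 by simp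
    then have "q - 1/q > 1" by linarith
    moreover have "q - 1/q < 2" using iq q2 by simp
    ultimately have "1 < m" "m < 2" using e by linarith+
    then show False by linarith
  qed
qed


definition c0 :: "complex list \<Rightarrow> complex" where
  "c0 xs = prod_list (map uminus xs)"

definition c1 :: "complex list \<Rightarrow> complex" where
  "c1 xs = c0 xs * sum_list (map (\<lambda>b. cnj b - inverse b) xs)"

lemma c0_Nil [simp]: "c0 [] = 1" and c0_Cons [simp]: "c0 (b # xs) = - b * c0 xs"
  by (simp_all add: c0_def)

lemma c1_Nil [simp]: "c1 [] = 0"
  by (simp add: c1_def)

lemma c1_Cons:
  assumes "b \<noteq> 0"
  shows "c1 (b # xs) = complex_of_real (1 - (cmod b)^2) * c0 xs - b * c1 xs"
proof -
  have bb: "b * cnj b = complex_of_real ((cmod b)^2)"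
    using complex_norm_square[of b] by simp
  have "c1 (b # xs) = - b * c0 xs * (cnj b - inverse b + sum_list (map (\<lambda>b. cnj b - inverse b) xs))"
    by (simp add: c1_def)
  also have "\<dots> = - (b * cnj b) * c0 xs + (b * inverse b) * c0 xs - b * c1 xs"
    by (simp add: c1_def algebra_simps)
  also have "\<dots> = complex_of_real (1 - (cmod b)^2) * c0 xs - b * c1 xs"
    using assms bb by (simp add: algebra_simps)
  finally show ?thesis .
qed

lemma norm_c0: "cmod (c0 xs) = prod_list (map cmod xs)"
  by (induction xs) (simp_all add: norm_mult)

lemma blaschke_bound:
  assumes "\<forall>b\<in>set xs. b \<noteq> 0 \<and> cmod b \<le> 1"
  shows "cmod (c0 xs) \<le> 1 \<and> cmod (c1 xs) \<le> 1 - (cmod (c0 xs))^2"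
  using assms
proof (induction xs)
  case Nil
  then show ?case by simp
next
  case (Cons b xs)
  define t where "t = cmod (c0 xs)"
  define a where "a = cmod b"
  have IH: "t \<le> 1" "cmod (c1 xs) \<le> 1 - t^2" using Cons unfolding t_def by auto
  have a: "0 \<le> a" "a \<le> 1" "b \<noteq> 0" using Cons.prems unfolding a_def by auto
  have t0: "0 \<le> t" unfolding t_def by simp
  have n0: "cmod (c0 (b # xs)) = a * t" by (simp add: a_def t_def norm_mult)
  have "a * t \<le> 1 * 1" using a IH t0 by (intro mult_mono) auto
  then have n0': "cmod (c0 (b # xs)) \<le> 1" using n0 by simp
  have "cmod (c1 (b # xs)) \<le> cmod (complex_of_real (1 - a^2) * c0 xs) + cmod (b * c1 xs)"
    unfolding c1_Cons[OF a(3)] a_def by (rule norm_triangle_ineq4)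
  also have "\<dots> = (1 - a^2) * t + a * cmod (c1 xs)"
  proof -
    have "cmod (complex_of_real (1 - a^2)) = 1 - a^2"
      using a by (simp only: norm_of_real) (simp add: abs_of_nonneg power_le_one)
    then have "cmod (complex_of_real (1 - a^2) * c0 xs) = (1 - a^2) * t"
      unfolding t_def norm_mult by simp
    moreover have "cmod (b * c1 xs) = a * cmod (c1 xs)" unfolding a_def norm_mult by simp
    ultimately show ?thesis by simp
  qed
  also have "\<dots> \<le> (1 - a^2) * t + a * (1 - t^2)"
    using IH a by (intro add_left_mono mult_left_mono) auto
  also have "\<dots> \<le> 1 - (a * t)^2"
  proof -
    have "(1 - a) * (1 - a * t) * (1 - t) \<ge> 0"
    proof -
      have "a * t \<le> 1 * 1" using a IH t0 by (intro mult_mono) auto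
      then show ?thesis using a IH by simp
    qed
    moreover have "1 - (a * t)^2 - ((1 - a^2) * t + a * (1 - t^2)) = (1 - a) * (1 - a * t) * (1 - t)"
      by (simp add: algebra_simps power2_eq_square)
    ultimately show ?thesis by linarith
  qed
  finally show ?case using n0 n0' by simp
qed

lemma c0_lt1:
  assumes "\<forall>b\<in>set xs. cmod b < 1" "xs \<noteq> []"
  shows "cmod (c0 xs) < 1"
  using assms
proof (induction xs)
  case Nil
  then show ?case by simp
next
  case (Cons b xs)
  have "cmod (c0 xs) \<le> 1"
  proof (cases "xs = []")
    case True then show ?thesis by simp
  next
    case False then show ?thesis using Cons by force
  qed
  moreover have "cmod b < 1" using Cons.prems by simp
  moreover have "cmod b * cmod (c0 xs) \<le> cmod b * 1"
    using calculation by (intro mult_left_mono) simp_all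
  ultimately have "cmod b * cmod (c0 xs) < 1" by linarith
  then show ?case by (simp add: norm_mult)
qed

definition LP :: "complex list \<Rightarrow> complex poly" where
  "LP xs = prod_list (map (\<lambda>b. [:-b, 1:]) xs)"

lemma LP_Nil [simp]: "LP [] = 1" and LP_Cons [simp]: "LP (b # xs) = [:-b, 1:] * LP xs"
  by (simp_all add: LP_def)

lemma coeff_lin_mult_0: "poly.coeff ([:a, 1:] * p) 0 = a * poly.coeff p 0" for a :: complex
  by (simp add: mult_pCons_left)

lemma coeff_lin_mult_Suc: "poly.coeff ([:a, 1:] * p) (Suc n) = a * poly.coeff p (Suc n) + poly.coeff p n" for a :: complex
  by (simp add: mult_pCons_left)

lemma LP_coeff0: "poly.coeff (LP xs) 0 = prod_list (map uminus xs)"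
  by (induction xs) (simp_all add: coeff_lin_mult_0)

lemma LP_coeff1:
  assumes "\<forall>b\<in>set xs. b \<noteq> 0"
  shows "poly.coeff (LP xs) 1 = - poly.coeff (LP xs) 0 * sum_list (map inverse xs)"
  using assms
proof (induction xs)
  case Nil
  then show ?case by simp
next
  case (Cons b xs)
  have b: "b \<noteq> 0" using Cons.prems by simp
  have "poly.coeff (LP (b # xs)) 1 = - b * poly.coeff (LP xs) 1 + poly.coeff (LP xs) 0"
    using coeff_lin_mult_Suc[of "-b" "LP xs" 0] by simp
  also have "\<dots> = - poly.coeff (LP (b # xs)) 0 * sum_list (map inverse (b # xs))"
    using Cons b by (simp add: coeff_lin_mult_0 algebra_simps)
  finally show ?case .
qed

lemma LP_lead_degree: "lead_coeff (LP xs) = 1 \<and> degree (LP xs) = length xs"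
proof (induction xs)
  case Nil
  then show ?case by simp
next
  case (Cons b xs)
  have nz: "LP xs \<noteq> 0" using Cons by auto
  have nz2: "[:-b, 1:] \<noteq> 0" by simp
  have "lead_coeff (LP (b # xs)) = lead_coeff [:-b, 1:] * lead_coeff (LP xs)"
    by (simp only: LP_Cons lead_coeff_mult)
  moreover have "degree (LP (b # xs)) = degree [:-b, 1:] + degree (LP xs)"
    by (simp only: LP_Cons degree_mult_eq[OF nz2 nz])
  moreover have m: "poly.coeff (LP xs) (length xs) = 1" using Cons.IH by metis
  ultimately show ?case using Cons.IH by (simp del: LP_Cons)
qed

lemma LP_monic: "poly.coeff (LP xs) (length xs) = 1"
  using LP_lead_degree[of xs] by metis

lemma LP_coeff_top: "poly.coeff (LP (b # xs)) (length xs) = - (b + sum_list xs)"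
proof (induction xs arbitrary: b)
  case Nil
  then show ?case by (simp add: coeff_lin_mult_0)
next
  case (Cons c xs)
  have "poly.coeff (LP (b # c # xs)) (length (c # xs)) =
        - b * poly.coeff (LP (c # xs)) (Suc (length xs)) + poly.coeff (LP (c # xs)) (length xs)"
    using coeff_lin_mult_Suc[of "-b" "LP (c # xs)" "length xs"] by simp
  also have "\<dots> = - b + - (c + sum_list xs)"
    using LP_monic[of "c # xs"] Cons[of c] by simp
  finally show ?case by simp
qed

lemma map_rat_int: "map_poly of_rat (map_poly of_int f :: rat poly) = (map_poly of_int f :: complex poly)"
  by (subst map_poly_map_poly) (auto simp: o_def)

lemma map_rat_mult:
  "map_poly (of_rat :: rat \<Rightarrow> complex) (p * q) = map_poly of_rat p * map_poly of_rat q"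
  by (induction p rule: pCons_induct)
    (simp_all add: of_rat_hom.map_poly_hom_add of_rat_hom.map_poly_hom_smult
      of_rat_hom.map_poly_pCons_hom algebra_simps)

lemma G:
  fixes p g :: "rat poly" and w :: complex
  assumes irr: "irreducible p" and pw: "poly (map_poly of_rat p) w = 0"
    and gw: "poly (map_poly of_rat g) w = 0"
  shows "p dvd g"
proof -
  define h where "h = gcd p g"
  define u where "u = fst (bezout_coefficients p g)"
  define v where "v = snd (bezout_coefficients p g)"
  have bez: "u * p + v * g = h"
    unfolding h_def u_def v_def by (rule bezout_coefficients_fst_snd)
  have hw: "poly (map_poly of_rat h) w = 0"
  proof -
    have "(map_poly of_rat h :: complex poly) = map_poly of_rat u * map_poly of_rat p + map_poly of_rat v * map_poly of_rat g"
      unfolding bez[symmetric] by (simp add: of_rat_hom.map_poly_hom_add map_rat_mult)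
    then show ?thesis using pw gw by simp
  qed
  have "h dvd p" unfolding h_def by simp
  then obtain k where pk: "p = h * k" by (auto elim: dvdE)
  from irreducibleD[OF irr pk] have "is_unit h \<or> is_unit k" .
  then show ?thesis
  proof
    assume "is_unit h"
    then obtain c where hc: "h = [:c:]" and c: "c dvd 1" unfolding is_unit_poly_iff by blast
    then have "c \<noteq> 0" by auto
    moreover have "poly (map_poly of_rat h) w = of_rat c" unfolding hc by (simp add: of_rat_hom.map_poly_pCons_hom)
    ultimately show ?thesis using hw by simp
  next
    assume ku: "is_unit k"
    have "p dvd h * k" using pk by simp
    then have "p dvd h" using ku by (simp add: dvd_mult_unit_iff)
    also have "h dvd g" unfolding h_def by simp
    finally show ?thesis .
  qed
qed

lemma G_root:
  fixes p g :: "rat poly" and w :: complex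
  assumes pw: "poly (map_poly of_rat p) w = 0" and d: "p dvd g"
  shows "poly (map_poly of_rat g) w = 0"
proof -
  from d obtain k where gk: "g = p * k" by (auto elim: dvdE)
  have "map_poly of_rat g = map_poly of_rat p * (map_poly of_rat k :: complex poly)"
    unfolding gk by (simp add: map_rat_mult)
  then show ?thesis using pw by simp
qed

lemma pisot_setup:
  fixes q :: real and z :: complex
  assumes ps: "pisot q" and gc: "galois_conjugate (complex_of_real q) z"
    and zq: "z \<noteq> complex_of_real q"
  shows "\<exists>xs. (\<forall>i. poly.coeff (LP (complex_of_real q # z # xs)) i \<in> \<int>) \<and>
              (\<forall>b\<in>set (z # xs). b \<noteq> 0 \<and> cmod b < 1)"
proof -
  let ?Q = "complex_of_real q"
  from ps have q1: "q > 1" and ai: "algebraic_int q"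
    and conj: "\<forall>w. galois_conjugate ?Q w \<and> w \<noteq> ?Q \<longrightarrow> cmod w < 1"
    unfolding pisot_def by auto
  from gc obtain p where irr: "irreducible p" and pq: "poly (map_poly of_rat p) ?Q = 0"
    and pz: "poly (map_poly of_rat p) z = 0"
    unfolding galois_conjugate_def by auto
  have conjp: "cmod w < 1" if "poly (map_poly of_rat p) w = 0" "w \<noteq> ?Q" for w
    using conj irr pq that unfolding galois_conjugate_def by blast
  from ai obtain f :: "int poly" where fq: "poly (map_poly of_int f) q = 0" and fl: "lead_coeff f = 1"
    unfolding algebraic_int_altdef_ipoly by blast
  have fQ: "poly (map_poly of_int f :: complex poly) ?Q = 0"
  proof -
    have "(map_poly of_int f :: complex poly) = map_poly of_real (map_poly of_int f :: real poly)"
      by (subst map_poly_map_poly) (auto simp: o_def)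
    then show ?thesis using fq by (simp add: of_real_hom.poly_map_poly)
  qed
  define fr :: "rat poly" where "fr = map_poly of_int f"
  have "p dvd fr" by (rule G[OF irr pq]) (simp add: fr_def map_rat_int fQ)
  then obtain k where frk: "fr = p * k" by (auto elim: dvdE)
  obtain r rg where rr: "rat_to_normalized_int_poly p = (r, rg)" by force
  obtain s sh where ss: "rat_to_normalized_int_poly k = (s, sh)" by force
  have f0: "f \<noteq> 0" using fl by auto
  have cf: "Polynomial.content f = 1"
  proof -
    have "Polynomial.content f dvd 1" using content_dvd_coeff[of f "degree f"] fl by simp
    then show ?thesis by (simp add: is_unit_content_iff)
  qed
  have fgh: "map_poly rat_of_int f = p * k" using frk fr_def by simp
  have "f = rg * sh" by (rule rat_to_int_factor_content_1[OF cf fgh rr ss f0])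
  then have "lead_coeff rg * lead_coeff sh = 1" using fl by (simp add: lead_coeff_mult)
  then have e: "lead_coeff rg = 1 \<or> lead_coeff rg = -1" by (auto simp: zmult_eq_1_iff)
  define e where "e = lead_coeff rg"
  define F where "F = Polynomial.smult e rg"
  have ee: "e * e = 1" using e e_def by auto
  have pr: "p = Polynomial.smult r (map_poly of_int rg)" and r0: "r > 0"
    using rat_to_normalized_int_poly[OF rr] by auto
  have rgF: "rg = Polynomial.smult e F" unfolding F_def using ee by simp
  define PC :: "complex poly" where "PC = map_poly of_int F"
  define c :: complex where "c = of_rat r * of_int e"
  have c0: "c \<noteq> 0" using r0 e by (auto simp: c_def e_def)
  have pPC: "map_poly of_rat p = Polynomial.smult c PC"
  proof -
    have "map_poly of_rat p = Polynomial.smult (of_rat r) (map_poly of_rat (map_poly of_int rg :: rat poly))"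
      using pr by (simp add: of_rat_hom.map_poly_hom_smult)
    also have "map_poly of_rat (map_poly of_int rg :: rat poly) = (map_poly of_int rg :: complex poly)"
      by (rule map_rat_int)
    also have "(map_poly of_int rg :: complex poly) = Polynomial.smult (of_int e) PC"
      unfolding PC_def by (subst rgF) (simp add: of_int_hom.map_poly_hom_smult)
    finally show ?thesis by (simp add: c_def)
  qed
  have roots: "poly PC w = 0 \<longleftrightarrow> poly (map_poly of_rat p) w = 0" for w
    using pPC c0 by simp
  have rg0: "rg \<noteq> 0" using e by auto
  have lcF: "lead_coeff F = 1" unfolding F_def using ee rg0 by (simp add: e_def)
  have PCl: "lead_coeff PC = 1" unfolding PC_def by (simp add: of_int_hom.hom_lead_coeff lcF)
  have PC0: "PC \<noteq> 0" using PCl by auto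
  have PCint: "poly.coeff PC i \<in> \<int>" for i unfolding PC_def by (simp add: coeff_map_poly)
  have p0: "p \<noteq> 0" using irr by auto
  have degp: "degree p > 0"
  proof (rule ccontr)
    assume "\<not> degree p > 0"
    then have "degree p = 0" by simp
    then obtain a where "p = [:a:]" by (metis degree_eq_zeroE)
    with pq p0 show False by simp
  qed
  have PCq: "poly PC ?Q = 0" using roots pq by simp
  have ord: "Polynomial.order ?Q PC = 1"
  proof -
    have "Polynomial.order ?Q PC \<noteq> 0" using PCq PC0 by (simp add: order_root)
    moreover have "Polynomial.order ?Q PC < 2"
    proof (rule ccontr)
      assume A: "\<not> Polynomial.order ?Q PC < 2"
      have "Polynomial.order ?Q PC = Suc (Polynomial.order ?Q (pderiv PC))" by (rule order_pderiv[OF PC0 PCq])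
      then have "Polynomial.order ?Q (pderiv PC) \<noteq> 0" using A by simp
      then have dq: "poly (pderiv PC) ?Q = 0" by (simp add: order_root)
      have "map_poly of_rat (pderiv p) = Polynomial.smult c (pderiv PC)"
        by (simp add: of_rat_hom.map_poly_pderiv pPC pderiv_smult)
      then have "poly (map_poly of_rat (pderiv p)) ?Q = 0" using dq by simp
      then have "p dvd pderiv p" by (rule G[OF irr pq])
      moreover have "pderiv p \<noteq> 0" using degp by (simp add: pderiv_eq_0_iff)
      ultimately have "degree p \<le> degree (pderiv p)" by (simp add: dvd_imp_degree_le)
      then show False using degp by (simp add: degree_pderiv)
    qed
    ultimately show ?thesis by simp
  qed
  have cq: "count (proots PC) ?Q = 1" using ord PC0 by simp
  have zroot: "poly PC z = 0" using roots pz by simp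
  have "count (proots PC) ?Q > 0" using cq by simp
  then have Qin: "?Q \<in># proots PC" by (simp only: count_greater_zero_iff)
  have cz: "count (proots PC) z > 0" using zroot PC0 by (simp add: order_root)
  have "count {#?Q#} z = 0" using zq by simp
  then have zin: "z \<in># proots PC - {#?Q#}" using cz by (simp only: in_diff_count)
  define R where "R = proots PC - {#?Q#} - {#z#}"
  have d1: "add_mset ?Q (proots PC - {#?Q#}) = proots PC" using Qin by (rule insert_DiffM)
  have d2: "add_mset z (proots PC - {#?Q#} - {#z#}) = proots PC - {#?Q#}" using zin by (rule insert_DiffM)
  have dec: "proots PC = add_mset ?Q (add_mset z R)"
    by (simp only: R_def d2 d1)
  obtain xs where xs: "mset xs = R" using ex_mset by blast
  have LPeq: "LP (?Q # z # xs) = PC"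
  proof -
    have "PC = Polynomial.smult (lead_coeff PC) (\<Prod>x\<in>#proots PC. [:-x, 1:])"
      by (rule complex_poly_decompose_multiset[symmetric])
    also have "\<dots> = (\<Prod>x\<in>#proots PC. [:-x, 1:])" using PCl by simp
    also have "proots PC = mset (?Q # z # xs)" using dec xs by simp
    also have "(\<Prod>x\<in>#mset (?Q # z # xs). [:-x, 1:]) = LP (?Q # z # xs)"
      unfolding LP_def by (metis mset_map prod_mset_prod_list)
    finally show ?thesis by simp
  qed
  have qR: "count R ?Q = 0" using cq dec zq by simp
  have A1: "\<forall>i. poly.coeff (LP (?Q # z # xs)) i \<in> \<int>" using LPeq PCint by simp
  have A2: "b \<noteq> 0 \<and> cmod b < 1" if b: "b \<in> set (z # xs)" for b
  proof -
    have broot: "b \<in># proots PC" using b dec xs by auto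
    then have pb: "poly (map_poly of_rat p) b = 0" using roots PC0 by simp
    have bQ: "b \<noteq> ?Q"
    proof
      assume "b = ?Q"
      then have "?Q \<in> set xs" using b zq by auto
      then have "?Q \<in># R" using xs by (metis set_mset_mset)
      then show False using qR by (simp add: count_eq_zero_iff)
    qed
    have "cmod b < 1" using conjp[OF pb bQ] .
    moreover have "b \<noteq> 0"
    proof
      assume "b = 0"
      then have "poly (map_poly of_rat [:0, 1::rat:]) b = 0" by simp
      then have "p dvd [:0, 1:]" using G[OF irr pb] by simp
      then have "poly (map_poly of_rat [:0, 1::rat:]) ?Q = 0" using G_root[OF pq] by blast
      then show False using q1 by simp
    qed
    ultimately show ?thesis by simp
  qed
  show ?thesis using A1 A2 by blast
qed

lemma sum_cnj_inv:
  "sum_list (map (\<lambda>b. cnj b - inverse b) xs) = cnj (sum_list xs) - sum_list (map inverse xs)"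
  by (induction xs) simp_all

theorem theorem5p1:
  fixes q :: real and z :: complex
  assumes "pisot q" and "q \<le> 1933 / 1000"
    and "galois_conjugate (complex_of_real q) z"
  shows "cmod z \<ge> (sqrt 5 - 1) / 2"
proof -
  define g :: real where "g = (sqrt 5 - 1) / 2"
  note gg = g_facts[OF g_def]
  have q1: "q > 1" using assms(1) unfolding pisot_def by auto
  have q2: "q \<le> 1933 / 1000" using assms(2) .
  show ?thesis
  proof (cases "z = complex_of_real q")
    case True
    then have "cmod z = q" using q1 by simp
    then show ?thesis using q1 gg g_def by simp
  next
    case False
    obtain xs where co: "\<forall>i. poly.coeff (LP (complex_of_real q # z # xs)) i \<in> \<int>"
      and bs: "\<forall>b\<in>set (z # xs). b \<noteq> 0 \<and> cmod b < 1"
      using pisot_setup[OF assms(1) assms(3) False] by blast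
    show ?thesis
    proof (rule ccontr)
      assume "\<not> ?thesis"
      then have rg0: "cmod z < g" unfolding g_def by simp
      define Q where "Q = complex_of_real q"
      define L where "L = Q # z # xs"
      define C0 where "C0 = c0 xs"
      define W where "W = c1 xs"
      define t where "t = cmod C0"
      define r where "r = cmod z"
      have rg: "r < g" using rg0 r_def by simp
      have z0: "z \<noteq> 0" and r1: "r < 1" using bs r_def by auto
      have r0: "r > 0" using z0 r_def by simp
      have Q0: "Q \<noteq> 0" using q1 Q_def by simp
      have coL: "\<forall>i. poly.coeff (LP L) i \<in> \<int>" using co L_def Q_def by simp
      have xsb: "\<forall>b\<in>set xs. b \<noteq> 0 \<and> cmod b \<le> 1" using bs by (auto intro: less_imp_le)
      have bb: "t \<le> 1" "cmod W \<le> 1 - t^2"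
        using blaschke_bound[OF xsb] t_def C0_def W_def by auto
      have Lnz: "\<forall>b\<in>set L. b \<noteq> 0" using bs Q0 L_def by auto
      have C0nz: "C0 \<noteq> 0" unfolding C0_def c0_def using xsb by (auto simp: prod_list_zero_iff)
      have t0: "t > 0" using C0nz t_def by simp
      obtain k where k: "poly.coeff (LP L) 0 = of_int k" using coL by (metis Ints_cases)
      have a0: "poly.coeff (LP L) 0 = Q * z * C0" unfolding L_def LP_coeff0 C0_def c0_def by simp
      have kqrt: "real_of_int \<bar>k\<bar> = q * r * t"
      proof -
        have "cmod (of_int k :: complex) = cmod (Q * z * C0)" using k a0 by simp
        then show ?thesis using q1 by (simp add: norm_mult Q_def r_def t_def)
      qed
      have "r * t \<le> r * 1" using bb r0 by (intro mult_left_mono) auto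
      then have "r * t < 1" using r1 by simp
      then have "q * (r * t) < q * 1" using q1 by (intro mult_strict_left_mono) auto
      then have qrt2: "q * r * t < 2" using q2 by (simp add: mult.assoc)
      have k0: "k \<noteq> 0" using a0 k Q0 z0 C0nz by auto
      have "\<bar>k\<bar> < 2" using kqrt qrt2 by linarith
      then have kk: "\<bar>k\<bar> = 1" using k0 by linarith
      have qrt: "q * r * t = 1" using kqrt kk by simp
      have qr1: "q * r \<ge> 1"
      proof (rule ccontr)
        assume "\<not> q * r \<ge> 1"
        moreover have "q * r * t \<le> q * r * 1" using bb q1 r0 by (intro mult_left_mono) auto
        ultimately show False using qrt by simp
      qed
      have k2: "k = 1 \<or> k = -1" using kk by auto
      obtain m where m: "poly.coeff (LP L) (length (z # xs)) = of_int m" using coL by (metis Ints_cases)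
      have mm: "of_int m = - (Q + sum_list (z # xs))"
        using m LP_coeff_top[of Q "z # xs"] unfolding L_def by metis
      have sumL: "sum_list (z # xs) = - of_int m - Q"
        unfolding mm by (simp add: algebra_simps)
      obtain j where j: "poly.coeff (LP L) 1 = of_int j" using coL by (metis Ints_cases)
      have inv: "sum_list (map inverse L) = - of_int (j * k)"
      proof -
        have e: "of_int j = - of_int k * sum_list (map inverse L)"
          using LP_coeff1[OF Lnz] j k by simp
        from k2 show ?thesis
        proof
          assume "k = 1" then show ?thesis using e by simp
        next
          assume "k = -1" then show ?thesis using e by simp
        qed
      qed
      have invzx: "sum_list (map inverse (z # xs)) = - of_int (j * k) - inverse Q"
        using inv unfolding L_def by (simp add: algebra_simps)
      define n where "n = j * k - m"
      define s where "s = q - 1/q"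
      have cQ: "cnj Q = Q" unfolding Q_def by simp
      have key: "sum_list (map (\<lambda>b. cnj b - inverse b) (z # xs)) = of_int n - complex_of_real s"
      proof -
        have "sum_list (map (\<lambda>b. cnj b - inverse b) (z # xs)) = cnj (sum_list (z # xs)) - sum_list (map inverse (z # xs))"
          by (rule sum_cnj_inv)
        also have "\<dots> = cnj (- of_int m - Q) - (- of_int (j * k) - inverse Q)"
          by (simp only: sumL invzx)
        also have "\<dots> = of_int (j * k - m) - (Q - inverse Q)" using cQ by simp
        also have "Q - inverse Q = complex_of_real s" unfolding Q_def s_def by (simp add: of_real_diff of_real_inverse divide_inverse)
        finally show ?thesis unfolding n_def by simp
      qed
      have c1z: "c1 (z # xs) = c0 (z # xs) * (of_int n - complex_of_real s)"
        unfolding c1_def key ..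
      have c1z': "c1 (z # xs) = complex_of_real (1 - r^2) * C0 - z * W"
        using c1_Cons[OF z0] r_def C0_def W_def by simp
      define X where "X = complex_of_real (1 - r^2) + z * (of_int n - complex_of_real s)"
      have E: "complex_of_real (1 - r^2) * C0 - z * W = - z * C0 * (of_int n - complex_of_real s)"
        using c1z c1z' C0_def by simp
      have eq0: "z * W = complex_of_real (1 - r^2) * C0 - (- z * C0 * (of_int n - complex_of_real s))"
        unfolding E[symmetric] by (simp add: algebra_simps)
      have eq: "z * W = C0 * X" unfolding eq0 X_def by (simp add: algebra_simps)
      have nX: "r * cmod W = t * cmod X"
        using arg_cong[OF eq, of cmod] by (simp add: norm_mult r_def t_def)
      have "r * cmod W \<le> r * (1 - t^2)" using bb r0 by (intro mult_left_mono) auto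
      then have tX: "t * cmod X \<le> r * (1 - t^2)" using nX by simp
      have "q * r * (t * cmod X) \<le> q * r * (r * (1 - t^2))"
        using tX q1 r0 by (intro mult_left_mono) auto
      moreover have "q * r * (t * cmod X) = cmod X" using qrt by (simp add: mult.assoc[symmetric])
      moreover have "q * r * (r * (1 - t^2)) = q * r^2 - (q * r * t) * (r * t)"
        by (simp add: algebra_simps power2_eq_square)
      moreover have "r * t = 1 / q" using qrt q1 by (simp add: field_simps)
      ultimately have Xb: "cmod X \<le> q * r^2 - 1/q" using qrt by simp
      define d where "d = \<bar>real_of_int n - s\<bar>"
      have nY: "cmod (z * (of_int n - complex_of_real s)) = r * d"
      proof -
        have "(of_int n - complex_of_real s) = complex_of_real (real_of_int n - s)" by simp
        then show ?thesis by (simp only: norm_mult norm_of_real r_def d_def)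
      qed
      have n1: "cmod (complex_of_real (1 - r^2)) = 1 - r^2"
      proof -
        have "r^2 \<le> 1" using r0 r1 by (simp add: power_le_one)
        then show ?thesis by (simp only: norm_of_real)
      qed
      have h1: "1 - r^2 - r * d \<le> q * r^2 - 1/q"
        using norm_diff_ineq[of "complex_of_real (1 - r^2)" "z * (of_int n - complex_of_real s)"] Xb n1 nY
        unfolding X_def by linarith
      have h2: "r * d - (1 - r^2) \<le> q * r^2 - 1/q"
        using norm_diff_ineq[of "z * (of_int n - complex_of_real s)" "complex_of_real (1 - r^2)"] Xb n1 nY
        unfolding X_def by (simp add: add.commute)
      have rc: "n = 0 \<and> q * r = 1"
        by (rule real_core[OF gg q1 q2 qr1 rg _ h1 h2]) (simp add: d_def s_def)
      then have t1: "t = 1" using qrt by simp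
      have xs0: "xs = []"
      proof (rule ccontr)
        assume "xs \<noteq> []"
        then have "cmod (c0 xs) < 1" using c0_lt1 bs by auto
        then show False using t1 t_def C0_def by simp
      qed
      have zval: "z = complex_of_real (- of_int m - q)" using sumL xs0 Q_def by simp
      have "of_int k = Q * z" using k a0 xs0 C0_def by simp
      then have "complex_of_real (of_int k) = complex_of_real (q * (- of_int m - q))"
        using zval Q_def by simp
      then have kq: "real_of_int k = q * (- of_int m - q)" by (simp only: of_real_eq_iff)
      have qm: "q + of_int k / q = of_int (- m)" using kq q1 by (simp add: field_simps)
      have "r * q < g * q" using rg q1 by (intro mult_strict_right_mono) auto
      then have "1 < g * q" using rc by (simp add: mult.commute)
      then have "1 / q < g" using q1 by (simp add: field_simps)
      then show False using real_degen[OF gg q1 q2 k2 qm] by simp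
    qed
  qed
qed

end
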